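(* In the migration–birth–death dynamics described below, if the dynamics is not $(t,0)$-stable, then the migration phase at step $t$ increases $\Phi(\mathbf{x})=\sum_v\mathbf{x}_v^2$ by at least $2\alpha_{\min}\epsilon\delta^3$.
   Context: Migration–birth–death dynamics: at each step there is a finite connected undirected graph of types, each type $v$ has mass $\mathbf{x}_v\ge0$, masses sum to $1$, and each edge $uv$ carries a continuously differentiable, increasing, odd function $F_{uv}=F_{vu}:[-1,1]\to[-1,1]$ with $F_{uv}(0)=0$. Let $\alpha_{\min}=\min_{uv,\,x\in[-1,1]}F'_{uv}(x)$ and $\alpha_{\max}=\max_{uv,\,x\in[-1,1]}F'_{uv}(x)$. Fixed parameters: $\epsilon>0$, $\delta>0$, $p\in[0,1]$, and a distribution $\mathcal{D}$ with support $[\beta_{\min},\beta_{\max}]$. Each step consists of three phases in order. (1) Migration: for each edge $uv$, an amount $\mathbf{x}_u\mathbf{x}_vF_{uv}(\mathbf{x}_u-\mathbf{x}_v)$ of mass moves from $v$ to $u$ (negative meaning the reverse direction), all simultaneously from current masses, except that no mass moves along $uv$ if $|\mathbf{x}_u-\mathbf{x}_v|\le\delta$. (2) Birth: with probability $p$ (independently of other steps) a new type $v$ is created; each existing type $u$ independently draws $Z_u\sim\mathcal{D}$ and transfers mass $Z_u\mathbf{x}_u$ to $v$; $v$ is connected to the existing graph arbitrarily so that it remains connected. (3) Death: a type $v$ with $\mathbf{x}_v\le\epsilon$ dies: its mass is split equally among its neighbours, $v$ is removed, and edges are added arbitrarily among its neighbours to keep the graph connected. The dynamics is $(T,d)$-stable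 iff for all $t$ with $T\le t\le T+d$ no population mass moves in the migration phase of step $t$. *)

theory Defs
  imports Complex_Main
begin

record state =
  verts :: "nat set"
  edges :: "(nat \<times> nat) set"
  mass  :: "nat \<Rightarrow> real"

definition graph_ok :: "state \<Rightarrow> bool" where
  "graph_ok s \<longleftrightarrow> finite (verts s) \<and> edges s \<subseteq> verts s \<times> verts s
     \<and> sym (edges s) \<and> irrefl (edges s)
     \<and> (\<forall>u\<in>verts s. \<forall>w\<in>verts s. (u, w) \<in> (edges s)\<^sup>*)"

definition nbrs :: "state \<Rightarrow> nat \<Rightarrow> nat set" where
  "nbrs s v = {u. (v, u) \<in> edges s}"

text \<open>Amount of mass moved from v to u along edge uv in the migration phase
  (negative means the reverse direction); zero if the masses differ by at most delta.\<close>

definition flow :: "(nat \<Rightarrow> nat \<Rightarrow> real \<Rightarrow> real) \<Rightarrow> real \<Rightarrow> state \<Rightarrow> nat \<Rightarrow> nat \<Rightarrow> real" where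
  "flow F \<delta> s u v =
     (if \<bar>mass s u - mass s v\<bar> \<le> \<delta> then 0
      else mass s u * mass s v * F u v (mass s u - mass s v))"

definition migrate :: "(nat \<Rightarrow> nat \<Rightarrow> real \<Rightarrow> real) \<Rightarrow> real \<Rightarrow> state \<Rightarrow> state" where
  "migrate F \<delta> s = s\<lparr>mass := (\<lambda>w. if w \<in> verts s
        then mass s w + (\<Sum>u\<in>nbrs s w. flow F \<delta> s w u) else mass s w)\<rparr>"

definition mass_moves :: "(nat \<Rightarrow> nat \<Rightarrow> real \<Rightarrow> real) \<Rightarrow> real \<Rightarrow> state \<Rightarrow> bool" where
  "mass_moves F \<delta> s \<longleftrightarrow> (\<exists>(u, v)\<in>edges s. flow F \<delta> s u v \<noteq> 0)"

text \<open>A birth event: new type w, each existing type u gives Z_u x_u with Z_u in the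
  support [beta_min, beta_max] of D; w is joined to a set N of existing types so that
  the graph stays connected.\<close>

definition birth_step :: "real \<Rightarrow> real \<Rightarrow> state \<Rightarrow> state \<Rightarrow> bool" where
  "birth_step bmin bmax s s' \<longleftrightarrow>
     (\<exists>w Z N. w \<notin> verts s \<and> (\<forall>u\<in>verts s. Z u \<in> {bmin..bmax}) \<and> N \<subseteq> verts s
       \<and> verts s' = insert w (verts s)
       \<and> edges s' = edges s \<union> {(w, u) | u. u \<in> N} \<union> {(u, w) | u. u \<in> N}
       \<and> mass s' = (\<lambda>u. if u = w then (\<Sum>v\<in>verts s. Z v * mass s v)
                        else if u \<in> verts s then mass s u - Z u * mass s u
                        else mass s u)
       \<and> graph_ok s')"

definition birth_phase :: "real \<Rightarrow> real \<Rightarrow> real \<Rightarrow> state \<Rightarrow> state \<Rightarrow> bool" where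
  "birth_phase p bmin bmax s s' \<longleftrightarrow>
     (p < 1 \<and> s' = s) \<or> (0 < p \<and> birth_step bmin bmax s s')"

definition death_step :: "real \<Rightarrow> state \<Rightarrow> state \<Rightarrow> bool" where
  "death_step \<epsilon> s s' \<longleftrightarrow>
     (\<exists>v\<in>verts s. mass s v \<le> \<epsilon>
       \<and> verts s' = verts s - {v}
       \<and> (\<exists>A. A \<subseteq> {(a, b). a \<in> nbrs s v \<and> b \<in> nbrs s v \<and> a \<noteq> b}
              \<and> edges s' = {(a, b) \<in> edges s. a \<noteq> v \<and> b \<noteq> v} \<union> A)
       \<and> mass s' = (\<lambda>u. if u \<in> nbrs s v then mass s u + mass s v / real (card (nbrs s v))
                        else mass s u)
       \<and> graph_ok s')"

inductive death_phase :: "real \<Rightarrow> state \<Rightarrow> state \<Rightarrow> bool" for \<epsilon> :: real where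
  finished: "(\<forall>v\<in>verts s. \<epsilon> < mass s v) \<Longrightarrow> death_phase \<epsilon> s s"
| step: "death_step \<epsilon> s s1 \<Longrightarrow> death_phase \<epsilon> s1 s2 \<Longrightarrow> death_phase \<epsilon> s s2"

definition valid_initial :: "real \<Rightarrow> state \<Rightarrow> bool" where
  "valid_initial \<epsilon> s \<longleftrightarrow> graph_ok s \<and> verts s \<noteq> {}
     \<and> (\<forall>v\<in>verts s. 0 \<le> mass s v) \<and> (\<Sum>v\<in>verts s. mass s v) = 1
     \<and> (\<forall>v\<in>verts s. \<epsilon> < mass s v)"

text \<open>X t is the configuration at the beginning of step t (t = 0, 1, 2, ...).\<close>

definition run :: "(nat \<Rightarrow> nat \<Rightarrow> real \<Rightarrow> real) \<Rightarrow> real \<Rightarrow> real \<Rightarrow> real \<Rightarrow> real \<Rightarrow> real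
                   \<Rightarrow> (nat \<Rightarrow> state) \<Rightarrow> bool" where
  "run F \<epsilon> \<delta> p bmin bmax X \<longleftrightarrow> valid_initial \<epsilon> (X 0) \<and>
     (\<forall>t. \<exists>b. birth_phase p bmin bmax (migrate F \<delta> (X t)) b \<and> death_phase \<epsilon> b (X (Suc t)))"

definition stable :: "(nat \<Rightarrow> nat \<Rightarrow> real \<Rightarrow> real) \<Rightarrow> real \<Rightarrow> (nat \<Rightarrow> state) \<Rightarrow> nat \<Rightarrow> nat \<Rightarrow> bool" where
  "stable F \<delta> X T d \<longleftrightarrow> (\<forall>t. T \<le> t \<and> t \<le> T + d \<longrightarrow> \<not> mass_moves F \<delta> (X t))"

definition Phi :: "state \<Rightarrow> real" where
  "Phi s = (\<Sum>v\<in>verts s. (mass s v)\<^sup>2)"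

definition alpha_min :: "(nat \<Rightarrow> nat \<Rightarrow> real \<Rightarrow> real) \<Rightarrow> real" where
  "alpha_min F' = Inf {F' u v x | u v x. u \<noteq> v \<and> x \<in> {-1..1}}"

end

theory Submission
  imports Defs "HOL-Analysis.Analysis"
begin

lemma sum_swap_sym:
  assumes "finite E" "sym E"
  shows "(\<Sum>p\<in>E. f p) = (\<Sum>p\<in>E. f (snd p, fst p))"
  by (rule sum.reindex_bij_witness[of _ prod.swap prod.swap])
     (use assms in \<open>auto simp: sym_def\<close>)

lemma sum_antisym_zero:
  fixes f :: "'a \<times> 'a \<Rightarrow> real"
  assumes "finite E" "sym E" "\<And>a b. (a,b)\<in>E \<Longrightarrow> f (b,a) = - f (a,b)"
  shows "(\<Sum>p\<in>E. f p) = 0"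
proof -
  have "(\<Sum>p\<in>E. f p) = (\<Sum>p\<in>E. f (snd p, fst p))" by (rule sum_swap_sym[OF assms(1,2)])
  also have "\<dots> = (\<Sum>p\<in>E. - f p)" by (rule sum.cong) (auto simp: assms(3))
  also have "\<dots> = - (\<Sum>p\<in>E. f p)" by (rule sum_negf)
  finally show ?thesis by linarith
qed

lemma sum_nbrs:
  assumes "graph_ok s"
  shows "(\<Sum>w\<in>verts s. \<Sum>u\<in>nbrs s w. h w u) = (\<Sum>p\<in>edges s. h (fst p) (snd p))"
proof -
  have fin: "finite (verts s)" and sub: "edges s \<subseteq> verts s \<times> verts s"
    using assms by (auto simp: graph_ok_def)
  have fn: "\<And>w. finite (nbrs s w)"
    by (rule finite_subset[of _ "verts s"]) (use sub fin in \<open>auto simp: nbrs_def\<close>)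
  have "(\<Sum>w\<in>verts s. \<Sum>u\<in>nbrs s w. h w u) = (\<Sum>p\<in>Sigma (verts s) (nbrs s). h (fst p) (snd p))"
    by (subst sum.Sigma) (auto simp: fin fn split_def)
  also have "Sigma (verts s) (nbrs s) = edges s" using sub by (auto simp: nbrs_def)
  finally show ?thesis .
qed

lemma death_sum:
  assumes ds: "death_step \<epsilon> s s'" and g: "graph_ok s" and sm: "(\<Sum>v\<in>verts s. mass s v) \<le> 1"
  shows "graph_ok s' \<and> (\<Sum>v\<in>verts s'. mass s' v) \<le> 1"
proof -
  from ds obtain v where v: "v \<in> verts s" and vs: "verts s' = verts s - {v}"
    and ms: "mass s' = (\<lambda>u. if u \<in> nbrs s v then mass s u + mass s v / real (card (nbrs s v)) else mass s u)"
    and g': "graph_ok s'" unfolding death_step_def by blast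
  have fin: "finite (verts s)" and sub: "edges s \<subseteq> verts s \<times> verts s" and irr: "irrefl (edges s)"
    and con: "\<forall>u\<in>verts s. \<forall>w\<in>verts s. (u, w) \<in> (edges s)\<^sup>*" using g by (auto simp: graph_ok_def)
  let ?N = "nbrs s v"
  have Nsub: "?N \<subseteq> verts s - {v}" using sub irr by (auto simp: nbrs_def irrefl_def)
  have finN: "finite ?N" using Nsub fin finite_subset by blast
  show ?thesis
  proof (cases "?N = {}")
    case True
    have "verts s = {v}"
    proof (rule ccontr)
      assume "verts s \<noteq> {v}"
      then obtain u where u: "u \<in> verts s" "u \<noteq> v" using v by blast
      have "(v,u) \<in> (edges s)\<^sup>*" using con v u by blast
      then show False using u(2) True
        by (cases rule: converse_rtranclE) (auto simp: nbrs_def)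
    qed
    then show ?thesis using vs g' by simp
  next
    case False
    have e1: "(\<Sum>u\<in>verts s'. mass s' u) = (\<Sum>u\<in>verts s - {v}. mass s u + (if u \<in> ?N then mass s v / real (card ?N) else 0))"
      unfolding vs ms by (rule sum.cong) auto
    have e2: "(\<Sum>u\<in>verts s - {v}. mass s u + (if u \<in> ?N then mass s v / real (card ?N) else 0))
       = (\<Sum>u\<in>verts s - {v}. mass s u) + (\<Sum>u\<in>verts s - {v}. if u \<in> ?N then mass s v / real (card ?N) else 0)"
      by (rule sum.distrib)
    have e3: "(\<Sum>u\<in>verts s - {v}. if u \<in> ?N then mass s v / real (card ?N) else 0) = (\<Sum>u\<in>(verts s - {v}) \<inter> ?N. mass s v / real (card ?N))"
      by (rule sum.inter_restrict[symmetric]) (use fin in simp)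
    have e4: "(verts s - {v}) \<inter> ?N = ?N" using Nsub by blast
    have e5: "(\<Sum>u\<in>?N. mass s v / real (card ?N)) = mass s v"
      using False finN by simp
    have e6: "(\<Sum>u\<in>verts s - {v}. mass s u) = (\<Sum>u\<in>verts s. mass s u) - mass s v"
      using fin v by (simp add: sum_diff1)
    have "(\<Sum>u\<in>verts s'. mass s' u) = (\<Sum>u\<in>verts s. mass s u)"
      unfolding e1 e2 e3 e4 e5 e6 by simp
    then show ?thesis using g' sm by linarith
  qed
qed

lemma birth_sum:
  assumes "birth_step bmin bmax s s'" "finite (verts s)"
  shows "graph_ok s' \<and> (\<Sum>v\<in>verts s'. mass s' v) = (\<Sum>v\<in>verts s. mass s v)"
proof -
  from assms(1) obtain w Z where w: "w \<notin> verts s" and vs: "verts s' = insert w (verts s)"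
    and ms: "mass s' = (\<lambda>u. if u = w then (\<Sum>v\<in>verts s. Z v * mass s v)
                        else if u \<in> verts s then mass s u - Z u * mass s u else mass s u)"
    and g: "graph_ok s'" unfolding birth_step_def by (elim exE conjE) (rule that; assumption)
  have "(\<Sum>v\<in>verts s'. mass s' v) = mass s' w + (\<Sum>v\<in>verts s. mass s' v)"
    unfolding vs using w assms(2) by simp
  also have "(\<Sum>v\<in>verts s. mass s' v) = (\<Sum>v\<in>verts s. mass s v - Z v * mass s v)"
    by (rule sum.cong) (use w in \<open>auto simp: ms\<close>)
  also have "mass s' w = (\<Sum>v\<in>verts s. Z v * mass s v)" by (simp add: ms)
  finally show ?thesis using g by (simp add: sum_subtractf)
qed

theorem mainTheorem11:
  fixes F F' :: "nat \<Rightarrow> nat \<Rightarrow> real \<Rightarrow> real"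
    and \<epsilon> \<delta> p bmin bmax :: real and X :: "nat \<Rightarrow> state" and t :: nat
  assumes F_sym: "\<And>u v. F u v = F v u"
    and F_deriv: "\<And>u v x. u \<noteq> v \<Longrightarrow> x \<in> {-1..1} \<Longrightarrow>
                   (F u v has_real_derivative F' u v x) (at x within {-1..1})"
    and F'_cont: "\<And>u v. u \<noteq> v \<Longrightarrow> continuous_on {-1..1} (F' u v)"
    and F_mono: "\<And>u v. u \<noteq> v \<Longrightarrow> mono_on {-1..1} (F u v)"
    and F_odd: "\<And>u v x. u \<noteq> v \<Longrightarrow> x \<in> {-1..1} \<Longrightarrow> F u v (-x) = - F u v x"
    and F_range: "\<And>u v x. u \<noteq> v \<Longrightarrow> x \<in> {-1..1} \<Longrightarrow> F u v x \<in> {-1..1}"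
    and F_zero: "\<And>u v. u \<noteq> v \<Longrightarrow> F u v 0 = 0"
    and eps: "0 < \<epsilon>" and del: "0 < \<delta>" and p: "0 \<le> p" "p \<le> 1"
    and beta: "bmin \<le> bmax"
    and R: "run F \<epsilon> \<delta> p bmin bmax X"
    and notstable: "\<not> stable F \<delta> X t 0"
  shows "Phi (migrate F \<delta> (X t)) \<ge> Phi (X t) + 2 * alpha_min F' * \<epsilon> * \<delta> ^ 3"
proof -
  define S where "S = {F' u v x | u v x. u \<noteq> v \<and> x \<in> {-1..(1::real)}}"
  have F'_nn: "F' u v x \<ge> 0" if uv: "u \<noteq> v" and x: "x \<in> {-1..1}" for u v x
  proof -
    have c: "continuous_on (closure {-1<..<(1::real)}) (F' u v)" using F'_cont[OF uv] by simp
    have xc: "x \<in> closure {-1<..<(1::real)}" using x by simp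
    have "F' u v y \<ge> 0" if y: "y \<in> {-1<..<1}" for y
    proof (rule mono_on_imp_deriv_nonneg[OF F_mono[OF uv]])
      have "at y within {-1..1} = at y" using y by (intro at_within_Icc_at) auto
      then show "(F u v has_real_derivative F' u v y) (at y)"
        using F_deriv[OF uv, of y] y by auto
      show "y \<in> interior {-1..1}" using y by simp
    qed
    then show ?thesis using continuous_ge_on_closure[OF c xc, of 0] by blast
  qed
  have bdd: "bdd_below S" unfolding S_def by (rule bdd_belowI[of _ 0]) (auto intro: F'_nn)
  have Sne: "F' 0 1 0 \<in> S" unfolding S_def by force
  have aS: "alpha_min F' = Inf S" by (simp add: alpha_min_def S_def)
  have a0: "alpha_min F' \<ge> 0" unfolding aS
    by (rule cInf_greatest) (use Sne in \<open>auto simp: S_def intro: F'_nn\<close>)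
  have alow: "alpha_min F' \<le> F' u v x" if "u \<noteq> v" "x \<in> {-1..1}" for u v x
    unfolding aS by (rule cInf_lower[OF _ bdd]) (use that in \<open>auto simp: S_def\<close>)
  have key: "alpha_min F' * d^2 \<le> d * F u v d" if uv: "u \<noteq> v" and d: "d \<in> {-1..1}" for u v d
  proof -
    have der: "(F u v has_derivative (\<lambda>h. F' u v y * h)) (at y within {a..b})"
      if "-1 \<le> a" "b \<le> 1" "a \<le> y" "y \<le> b" for a b y
    proof -
      have "(F u v has_real_derivative F' u v y) (at y within {a..b})"
        by (rule DERIV_subset[OF F_deriv[OF uv]]) (use that in auto)
      then show ?thesis by (simp add: has_field_derivative_def)
    qed
    obtain y where y: "y \<in> {-1..1}" and Fd: "F u v d = F' u v y * d"
    proof (cases "d \<ge> 0")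
      case True
      have "\<exists>y\<in>{0..d}. F u v d - F u v 0 = F' u v y * (d - 0)"
        by (rule mvt_very_simple[where f="F u v" and f'="\<lambda>y h. F' u v y * h", OF True])
           (rule der, use d in auto)
      then obtain y where "y \<in> {0..d}" "F u v d - F u v 0 = F' u v y * (d - 0)" by blast
      then show ?thesis using that[of y] d F_zero[OF uv] by auto
    next
      case False
      have "\<exists>y\<in>{d..0}. F u v 0 - F u v d = F' u v y * (0 - d)"
        by (rule mvt_very_simple[where f="F u v" and f'="\<lambda>y h. F' u v y * h"])
           (use False in simp, rule der, use d in auto)
      then obtain y where "y \<in> {d..0}" "F u v 0 - F u v d = F' u v y * (0 - d)" by blast
      then show ?thesis using that[of y] d F_zero[OF uv] by (auto simp: algebra_simps)
    qed
    have "alpha_min F' * d^2 \<le> F' u v y * d^2"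
      by (rule mult_right_mono[OF alow[OF uv y]]) simp
    also have "\<dots> = d * F u v d" by (simp add: Fd power2_eq_square)
    finally show ?thesis .
  qed
  define good where "good s \<longleftrightarrow> graph_ok s \<and> (\<Sum>v\<in>verts s. mass s v) \<le> 1
      \<and> (\<forall>v\<in>verts s. \<epsilon> < mass s v)" for s
  have range: "0 < mass s v \<and> mass s v \<le> 1" if "good s" "v \<in> verts s" for s v
  proof -
    have fin: "finite (verts s)" using that by (simp add: good_def graph_ok_def)
    have "mass s v \<le> (\<Sum>v\<in>verts s. mass s v)"
      by (rule member_le_sum[OF that(2) _ fin]) (use that eps in \<open>force simp: good_def\<close>)
    then show ?thesis using that eps by (force simp: good_def)
  qed
  have anti: "flow F \<delta> s u w = - flow F \<delta> s w u" if "good s" "(w,u) \<in> edges s" for s w u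
  proof -
    have wu: "w \<noteq> u" using that by (auto simp: good_def graph_ok_def irrefl_def)
    have inV: "w \<in> verts s" "u \<in> verts s" using that by (auto simp: good_def graph_ok_def)
    have dr: "mass s w - mass s u \<in> {-1..1}"
      using range[OF that(1) inV(1)] range[OF that(1) inV(2)] by auto
    have "F u w (mass s u - mass s w) = - F w u (mass s w - mass s u)"
      using F_odd[OF wu dr] F_sym[of u w] by simp
    then show ?thesis unfolding flow_def by (auto simp: abs_minus_commute)
  qed
  have mig: "graph_ok (migrate F \<delta> s) \<and>
      (\<Sum>w\<in>verts (migrate F \<delta> s). mass (migrate F \<delta> s) w) = (\<Sum>w\<in>verts s. mass s w)"
    if gs: "good s" for s
  proof -
    have g: "graph_ok s" using gs by (simp add: good_def)
    have vm: "verts (migrate F \<delta> s) = verts s" "edges (migrate F \<delta> s) = edges s"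
      by (simp_all add: migrate_def)
    have finE: "finite (edges s)" using g
      by (auto simp: graph_ok_def intro: finite_subset[of _ "verts s \<times> verts s"])
    have "(\<Sum>w\<in>verts s. mass (migrate F \<delta> s) w) = (\<Sum>w\<in>verts s. mass s w + (\<Sum>u\<in>nbrs s w. flow F \<delta> s w u))"
      by (rule sum.cong) (auto simp: migrate_def)
    also have "\<dots> = (\<Sum>w\<in>verts s. mass s w) + (\<Sum>p\<in>edges s. flow F \<delta> s (fst p) (snd p))"
      by (simp add: sum.distrib sum_nbrs[OF g])
    also have "(\<Sum>p\<in>edges s. flow F \<delta> s (fst p) (snd p)) = 0"
    proof (rule sum_antisym_zero)
      show "finite (edges s)" by (rule finE)
      show "sym (edges s)" using g by (simp add: graph_ok_def)
      fix a b assume "(a, b) \<in> edges s"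
      then show "flow F \<delta> s (fst (b, a)) (snd (b, a)) = - flow F \<delta> s (fst (a, b)) (snd (a, b))"
        using anti[OF gs] by simp
    qed
    finally show ?thesis using g by (simp add: vm graph_ok_def)
  qed
  have dp: "good s2" if "death_phase \<epsilon> s s2" "graph_ok s" "(\<Sum>v\<in>verts s. mass s v) \<le> 1" for s s2
    using that
  proof (induction rule: death_phase.induct)
    case (finished s) then show ?case by (simp add: good_def)
  next
    case (step s s1 s2) then show ?case using death_sum[OF step.hyps(1) step.prems] by blast
  qed
  have goodX: "good (X n)" for n
  proof (induction n)
    case 0 then show ?case using R by (auto simp: run_def valid_initial_def good_def)
  next
    case (Suc n)
    obtain b where bp: "birth_phase p bmin bmax (migrate F \<delta> (X n)) b"
      and dph: "death_phase \<epsilon> b (X (Suc n))"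
      using R unfolding run_def by blast
    have m: "graph_ok (migrate F \<delta> (X n)) \<and>
        (\<Sum>v\<in>verts (migrate F \<delta> (X n)). mass (migrate F \<delta> (X n)) v) \<le> 1"
      using mig[OF Suc.IH] Suc.IH by (simp add: good_def)
    have "graph_ok b \<and> (\<Sum>v\<in>verts b. mass b v) \<le> 1"
    proof (cases "b = migrate F \<delta> (X n)")
      case True then show ?thesis using m by simp
    next
      case False
      then have "birth_step bmin bmax (migrate F \<delta> (X n)) b" using bp by (auto simp: birth_phase_def)
      moreover have "finite (verts (migrate F \<delta> (X n)))" using m by (simp add: graph_ok_def)
      ultimately show ?thesis using birth_sum m by fastforce
    qed
    then show ?case using dp dph by blast
  qed
  define s where "s = X t"
  have gs: "good s" unfolding s_def by (rule goodX)
  have g: "graph_ok s" using gs by (simp add: good_def)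
  have fin: "finite (verts s)" using g by (simp add: graph_ok_def)
  have finE: "finite (edges s)" using g
    by (auto simp: graph_ok_def intro: finite_subset[of _ "verts s \<times> verts s"])
  have symE: "sym (edges s)" using g by (simp add: graph_ok_def)
  from notstable obtain a b where ab: "(a,b) \<in> edges s" and fab: "flow F \<delta> s a b \<noteq> 0"
    unfolding stable_def mass_moves_def s_def by auto
  define gg where "gg = (\<lambda>p. (mass s (fst p) - mass s (snd p)) * flow F \<delta> s (fst p) (snd p))"
  have ggeq: "gg (w,u) = (if \<bar>mass s w - mass s u\<bar> \<le> \<delta> then 0 else
      (mass s w * mass s u) * ((mass s w - mass s u) * F w u (mass s w - mass s u)))" for w u
    unfolding gg_def flow_def by (simp add: mult_ac)
  have edge_facts: "w \<noteq> u \<and> mass s w - mass s u \<in> {-1..1} \<and> 0 < mass s w \<and> 0 < mass s u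
      \<and> \<epsilon> < mass s w \<and> \<epsilon> < mass s u" if "(w,u) \<in> edges s" for w u
  proof -
    have wu: "w \<noteq> u" using that g by (auto simp: graph_ok_def irrefl_def)
    have inV: "w \<in> verts s" "u \<in> verts s" using that g by (auto simp: graph_ok_def)
    show ?thesis using wu range[OF gs inV(1)] range[OF gs inV(2)] gs inV by (auto simp: good_def)
  qed
  have gnn: "gg (w,u) \<ge> 0" if "(w,u) \<in> edges s" for w u
  proof -
    note ef = edge_facts[OF that]
    have "0 \<le> alpha_min F' * (mass s w - mass s u)^2" using a0 by simp
    also have "\<dots> \<le> (mass s w - mass s u) * F w u (mass s w - mass s u)"
      using key[of w u "mass s w - mass s u"] ef by simp
    finally have "0 \<le> (mass s w - mass s u) * F w u (mass s w - mass s u)" .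
    moreover have "0 \<le> mass s w * mass s u" using ef by simp
    ultimately show ?thesis unfolding ggeq by simp
  qed
  have gab: "gg (a,b) \<ge> alpha_min F' * \<epsilon> * \<delta> ^ 3"
  proof -
    note ef = edge_facts[OF ab]
    define d where "d = mass s a - mass s b"
    have dbig: "\<bar>d\<bar> > \<delta>" using fab unfolding flow_def d_def by (auto split: if_splits)
    have p1: "\<epsilon> * \<delta> \<le> mass s a * mass s b"
    proof (cases "mass s a \<ge> mass s b")
      case True
      then have "\<delta> \<le> mass s a" using dbig ef unfolding d_def by auto
      then show ?thesis using ef eps del mult_mono[of \<epsilon> "mass s b" \<delta> "mass s a"] by (simp add: mult.commute)
    next
      case False
      then have "\<delta> \<le> mass s b" using dbig ef unfolding d_def by auto
      then show ?thesis using ef eps del mult_mono[of \<epsilon> "mass s a" \<delta> "mass s b"] by simp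
    qed
    have p2: "\<delta>^2 \<le> d^2"
      using power_mono[of \<delta> "\<bar>d\<bar>" 2] dbig del by simp
    have "(\<epsilon> * \<delta>) * \<delta>^2 \<le> (mass s a * mass s b) * d^2"
      by (rule mult_mono[OF p1 p2]) (use ef in auto)
    then have "alpha_min F' * ((\<epsilon> * \<delta>) * \<delta>^2) \<le> alpha_min F' * ((mass s a * mass s b) * d^2)"
      by (rule mult_left_mono) (rule a0)
    also have "\<dots> = (mass s a * mass s b) * (alpha_min F' * d^2)" by simp
    also have "\<dots> \<le> (mass s a * mass s b) * (d * F a b d)"
      by (rule mult_left_mono) (use key[of a b d] ef d_def in auto)
    also have "\<dots> = gg (a,b)" unfolding ggeq d_def[symmetric] using dbig by simp
    finally show ?thesis by (simp add: power3_eq_cube power2_eq_square mult_ac)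
  qed
  have gba: "gg (b,a) = gg (a,b)"
    unfolding gg_def using anti[OF gs ab] by (simp add: algebra_simps)
  have ba: "(b,a) \<in> edges s" using ab symE by (auto simp: sym_def)
  have abne: "a \<noteq> b" using edge_facts[OF ab] by simp
  define A where "A = (\<Sum>p\<in>edges s. mass s (fst p) * flow F \<delta> s (fst p) (snd p))"
  have A1: "(\<Sum>w\<in>verts s. mass s w * (\<Sum>u\<in>nbrs s w. flow F \<delta> s w u)) = A"
    unfolding A_def sum_distrib_left by (rule sum_nbrs[OF g])
  have "A = (\<Sum>p\<in>edges s. mass s (snd p) * flow F \<delta> s (snd p) (fst p))"
    unfolding A_def using sum_swap_sym[OF finE symE, of "\<lambda>p. mass s (fst p) * flow F \<delta> s (fst p) (snd p)"] by simp
  also have "\<dots> = (\<Sum>p\<in>edges s. - (mass s (snd p) * flow F \<delta> s (fst p) (snd p)))"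
  proof (rule sum.cong)
    fix p assume "p \<in> edges s"
    then have "flow F \<delta> s (snd p) (fst p) = - flow F \<delta> s (fst p) (snd p)"
      using anti[OF gs, of "fst p" "snd p"] by simp
    then show "mass s (snd p) * flow F \<delta> s (snd p) (fst p) = - (mass s (snd p) * flow F \<delta> s (fst p) (snd p))"
      by simp
  qed simp
  finally have A2: "A = - (\<Sum>p\<in>edges s. mass s (snd p) * flow F \<delta> s (fst p) (snd p))"
    by (simp add: sum_negf)
  have "2 * A = (\<Sum>p\<in>edges s. gg p)"
    unfolding gg_def left_diff_distrib sum_subtractf using A2 A_def by simp
  also have "(\<Sum>p\<in>edges s. gg p) \<ge> (\<Sum>p\<in>{(a,b),(b,a)}. gg p)"
    by (rule sum_mono2[OF finE]) (use ab ba gnn in auto)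
  finally have A3: "2 * A \<ge> 2 * (alpha_min F' * \<epsilon> * \<delta> ^ 3)"
    using gab gba abne by simp
  have "Phi (migrate F \<delta> s) = (\<Sum>w\<in>verts s. (mass s w + (\<Sum>u\<in>nbrs s w. flow F \<delta> s w u))^2)"
    unfolding Phi_def by (simp add: migrate_def)
  also have "\<dots> \<ge> (\<Sum>w\<in>verts s. (mass s w)^2 + 2 * (mass s w * (\<Sum>u\<in>nbrs s w. flow F \<delta> s w u)))"
    by (rule sum_mono) (simp add: power2_eq_square algebra_simps)
  finally have "Phi (migrate F \<delta> s) \<ge> Phi s + 2 * A"
    unfolding Phi_def sum.distrib A1[symmetric] by (simp add: sum_distrib_left)
  then show ?thesis using A3 unfolding s_def by simp
qed

end
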